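(* For all $n\ge0$, $b\ge1$ and $\Re(s)\ge0$, $$e^*_{n,b}(s)=\frac{\mathbf{1}_{\{b\ge2\}}\,b\,e^*_{n,b-1}(s)+\mathbf{1}_{\{b=1\}}}{(n+b)(s+\rho+1)}+\frac{1}{s+\rho+1}\,\frac{n}{n+b}\,e^*_{n-1,b}(s)+\frac{\rho}{s+\rho+1}\sum_{m\ge1}q_m\,e^*_{n+m,b}(s),$$ with the convention $e^*_{-1,b}(s)\equiv0$ for all $b\ge1$.
   Context: Queueing model: an $M^{[X]}/M/1$ processor-sharing queue. Batches of jobs arrive according to a Poisson process with rate $\rho>0$; batch sizes are i.i.d. with $\mathbb{P}(B=b)=q_b>0$, $\sum_{b\ge1}q_b=1$; each job requires an exponentially distributed service with mean $1$; the unit server capacity is shared equally among all jobs present; all interarrival times, batch sizes and service requirements are mutually independent. For $n\ge0$, $b\ge1$, $\Omega_{n,b}$ denotes the sojourn time of a tagged batch (time between its arrival and the departure of the last of its jobs) given that there are $n$ jobs in the system at its arrival and the batch has $b$ jobs, and $e^*_{n,b}(s)=\mathbb{E}(e^{-s\Omega_{n,b}})$. *)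

theory Defs
  imports "HOL-Probability.Probability"
begin

text \<open>Tagged-batch Markov model of the M^[X]/M/1 processor-sharing queue.
  State (n, b): n = number of other jobs, b = remaining jobs of the tagged batch.
  At each step, fresh independent innovations (a, d, m, u) are drawn:
  a ~ Exp(rho) time to the next batch arrival, d ~ Exp(1) time to the next
  service completion (total service rate 1 shared equally), m ~ q batch size,
  u ~ Uniform[0,1] selects which of the n+b jobs completes (each with prob
  1/(n+b)).  By memorylessness this is the exact law of the process.\<close>

type_synonym innov = "real \<times> real \<times> nat \<times> real"

definition innov_measure :: "real \<Rightarrow> nat pmf \<Rightarrow> innov measure" where
  "innov_measure \<rho> q =
     density lborel (\<lambda>x. ennreal (exponential_density \<rho> x)) \<Otimes>\<^sub>M
     (density lborel (\<lambda>x. ennreal (exponential_density 1 x)) \<Otimes>\<^sub>M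
     (measure_pmf q \<Otimes>\<^sub>M uniform_measure lborel {0..1}))"

definition path_measure :: "real \<Rightarrow> nat pmf \<Rightarrow> innov stream measure" where
  "path_measure \<rho> q = stream_space (innov_measure \<rho> q)"

fun ps_step :: "nat \<times> nat \<Rightarrow> innov \<Rightarrow> nat \<times> nat" where
  "ps_step (n, b) (a, d, m, u) =
     (if a < d then (n + m, b)
      else if u < real b / real (n + b) then (n, b - 1)
      else (n - 1, b))"

fun ps_state :: "nat \<Rightarrow> nat \<Rightarrow> innov stream \<Rightarrow> nat \<Rightarrow> nat \<times> nat" where
  "ps_state n b \<omega> 0 = (n, b)"
| "ps_state n b \<omega> (Suc k) = ps_step (ps_state n b \<omega> k) (\<omega> !! k)"

text \<open>Holding time of step k is min(a_k, d_k); the sojourn time is the total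
  time spent before the tagged batch has no jobs left (possibly infinite).\<close>
definition sojourn :: "nat \<Rightarrow> nat \<Rightarrow> innov stream \<Rightarrow> ennreal" where
  "sojourn n b \<omega> =
     (\<Sum>k. if snd (ps_state n b \<omega> k) \<noteq> 0
           then ennreal (min (fst (\<omega> !! k)) (fst (snd (\<omega> !! k)))) else 0)"

text \<open>Laplace transform e*_{n,b}(s) = E(exp(-s Omega_{n,b})), with the
  (almost surely irrelevant) convention exp(-s * infinity) = 0.\<close>
definition sojourn_LT :: "real \<Rightarrow> nat pmf \<Rightarrow> nat \<Rightarrow> nat \<Rightarrow> complex \<Rightarrow> complex" where
  "sojourn_LT \<rho> q n b s =
     (\<integral>\<omega>. (if sojourn n b \<omega> < \<infinity>
            then exp (- s * complex_of_real (enn2real (sojourn n b \<omega>))) else 0)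
      \<partial>path_measure \<rho> q)"

end

theory Submission
  imports Defs
begin

lemma (in prob_space) integral_stream_space:
  fixes f :: "_ \<Rightarrow> 'b::{banach, second_countable_topology}"
  assumes [measurable]: "f \<in> borel_measurable (stream_space M)"
    and int: "integrable (stream_space M) f"
  shows "integral\<^sup>L (stream_space M) f = (\<integral>x. (\<integral>X. f (x ## X) \<partial>stream_space M) \<partial>M)"
proof -
  interpret S: sequence_space M ..
  interpret P: pair_sigma_finite M "\<Pi>\<^sub>M i::nat\<in>UNIV. M" ..
  have i1: "integrable S.S (\<lambda>X. f (to_stream X))"
    using int by (subst (asm) stream_space_eq_distr) (simp add: integrable_distr_eq)
  have i2: "integrable (M \<Otimes>\<^sub>M S.S) (\<lambda>X. f (to_stream ((\<lambda>(s, \<omega>). case_nat s \<omega>) X)))"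
    using i1 by (subst (asm) S.PiM_iter[symmetric]) (simp add: integrable_distr_eq)
  have "integral\<^sup>L (stream_space M) f = (\<integral>X. f (to_stream X) \<partial>S.S)"
    by (subst stream_space_eq_distr) (simp add: integral_distr)
  also have "\<dots> = (\<integral>X. f (to_stream ((\<lambda>(s, \<omega>). case_nat s \<omega>) X)) \<partial>(M \<Otimes>\<^sub>M S.S))"
    by (subst S.PiM_iter[symmetric]) (simp add: integral_distr)
  also have "\<dots> = (\<integral>x. \<integral>X. f (to_stream ((\<lambda>(s, \<omega>). case_nat s \<omega>) (x, X))) \<partial>S.S \<partial>M)"
    by (rule P.integral_fst'[OF i2, symmetric])
  also have "\<dots> = (\<integral>x. \<integral>X. f (x ## to_stream X) \<partial>S.S \<partial>M)"
    by (auto intro!: Bochner_Integration.integral_cong simp: to_stream_nat_case)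
  also have "\<dots> = (\<integral>x. \<integral>X. f (x ## X) \<partial>stream_space M \<partial>M)"
    by (subst stream_space_eq_distr)
       (simp add: integral_distr cong: Bochner_Integration.integral_cong)
  finally show ?thesis .
qed

lemma ps_state_Stream:
  "ps_state n b (x ## X) (Suc k) = ps_state (fst (ps_step (n, b) x)) (snd (ps_step (n, b) x)) X k"
  by (induction k) auto

lemma ps_state_zero: "snd (ps_state n 0 X k) = 0"
proof (induction k)
  case (Suc k)
  then show ?case
    by (cases "ps_state n 0 X k"; cases "X !! k") auto
qed simp

lemma sojourn_zero: "sojourn n 0 X = 0"
  unfolding sojourn_def using ps_state_zero by simp

lemma sojourn_Stream:
  "sojourn n b (x ## X) = (if b \<noteq> 0 then ennreal (min (fst x) (fst (snd x))) else 0)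
     + sojourn (fst (ps_step (n, b) x)) (snd (ps_step (n, b) x)) X"
proof -
  define f where "f = (\<lambda>k. if snd (ps_state n b (x ## X) k) \<noteq> 0
           then ennreal (min (fst ((x ## X) !! k)) (fst (snd ((x ## X) !! k)))) else 0)"
  have tail: "(\<lambda>k. f (Suc k)) = (\<lambda>k. if snd (ps_state (fst (ps_step (n, b) x)) (snd (ps_step (n, b) x)) X k) \<noteq> 0
           then ennreal (min (fst (X !! k)) (fst (snd (X !! k)))) else 0)"
    unfolding f_def by (simp only: ps_state_Stream snth_Stream)
  have "(\<lambda>k. f (Suc k)) sums (\<Sum>k. f (Suc k))"
    by (rule summable_sums) simp
  then have "f sums ((\<Sum>k. f (Suc k)) + f 0)" by (rule sums_Suc)
  then have "suminf f = f 0 + (\<Sum>k. f (Suc k))"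
    by (simp add: sums_unique[symmetric] add.commute)
  then show ?thesis
    unfolding sojourn_def tail[symmetric] by (simp add: f_def)
qed

lemma prob_space_innov: "\<rho> > 0 \<Longrightarrow> prob_space (innov_measure \<rho> q)"
  unfolding innov_measure_def
  by (intro prob_space_pair prob_space_exponential_density prob_space_measure_pmf
        prob_space_uniform_measure) auto

lemma ps_step_alt:
  "ps_step p x = (if fst x < fst (snd x) then (fst p + fst (snd (snd x)), snd p)
      else if snd (snd (snd x)) < real (snd p) / real (fst p + snd p) then (fst p, snd p - 1)
      else (fst p - 1, snd p))"
  by (cases p; cases x) auto

lemma measurable_ps_step[measurable]:
  "(\<lambda>x. ps_step p x) \<in> innov_measure \<rho> q \<rightarrow>\<^sub>M count_space UNIV"
  unfolding ps_step_alt innov_measure_def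
  by measurable

lemma measurable_ps_state[measurable]:
  "(\<lambda>\<omega>. ps_state n b \<omega> k) \<in> stream_space (innov_measure \<rho> q) \<rightarrow>\<^sub>M count_space UNIV"
proof (induction k)
  case 0
  then show ?case by simp
next
  case (Suc k)
  have "(\<lambda>\<omega>. (\<lambda>p \<omega>. ps_step p (\<omega> !! k)) (ps_state n b \<omega> k) \<omega>)
          \<in> stream_space (innov_measure \<rho> q) \<rightarrow>\<^sub>M count_space UNIV"
    by (rule measurable_compose_countable'[OF _ Suc]) auto
  then show ?case by simp
qed

lemma measurable_sojourn[measurable]:
  "sojourn n b \<in> borel_measurable (stream_space (innov_measure \<rho> q))"
proof -
  have [measurable]: "Measurable.pred (stream_space (innov_measure \<rho> q)) (\<lambda>\<omega>. snd (ps_state n b \<omega> k) \<noteq> 0)" for k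
    by (rule measurable_compose[OF measurable_ps_state]) simp
  have [measurable]: "(\<lambda>x. min (fst x) (fst (snd x))) \<in> borel_measurable (innov_measure \<rho> q)"
    unfolding innov_measure_def by measurable
  show ?thesis
    unfolding sojourn_def[abs_def]
    by measurable
qed

definition Gf :: "complex \<Rightarrow> nat \<Rightarrow> nat \<Rightarrow> innov stream \<Rightarrow> complex" where
  "Gf s n b \<omega> = (if sojourn n b \<omega> < \<infinity>
            then exp (- s * complex_of_real (enn2real (sojourn n b \<omega>))) else 0)"

lemma sojourn_LT_Gf: "sojourn_LT \<rho> q n b s = integral\<^sup>L (path_measure \<rho> q) (Gf s n b)"
  unfolding sojourn_LT_def Gf_def[abs_def] ..

lemma measurable_Gf[measurable]:
  "Gf s n b \<in> borel_measurable (stream_space (innov_measure \<rho> q))"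
  unfolding Gf_def[abs_def] by measurable

lemma norm_Gf: "Re s \<ge> 0 \<Longrightarrow> norm (Gf s n b \<omega>) \<le> 1"
  unfolding Gf_def by (auto simp: norm_exp_eq_Re mult_nonneg_nonneg)

definition Exf :: "complex \<Rightarrow> innov \<Rightarrow> complex" where
  "Exf s x = exp (- s * complex_of_real (enn2real (ennreal (min (fst x) (fst (snd x))))))"

lemma Gf_zero: "Gf s n 0 X = 1"
  unfolding Gf_def by (simp add: sojourn_zero)

lemma Gf_Stream:
  assumes "b \<noteq> 0"
  shows "Gf s n b (x ## X) = Exf s x * Gf s (fst (ps_step (n, b) x)) (snd (ps_step (n, b) x)) X"
proof -
  define h where "h = ennreal (min (fst x) (fst (snd x)))"
  define T where "T = sojourn (fst (ps_step (n, b) x)) (snd (ps_step (n, b) x)) X"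
  have eq: "sojourn n b (x ## X) = h + T"
    using assms unfolding h_def T_def by (simp add: sojourn_Stream)
  have hfin: "h < \<infinity>" unfolding h_def by simp
  show ?thesis
  proof (cases "T < \<infinity>")
    case True
    then have "h + T < \<infinity>" using hfin by (simp add: ennreal_add_less_top)
    then show ?thesis
      unfolding Gf_def eq Exf_def h_def[symmetric] T_def[symmetric]
      using True hfin by (simp add: enn2real_plus exp_add[symmetric] algebra_simps)
  next
    case False
    then have "\<not> h + T < \<infinity>" by (simp add: ennreal_add_less_top top.not_eq_extremum)
    then show ?thesis
      unfolding Gf_def eq Exf_def h_def[symmetric] T_def[symmetric]
      using False by simp
  qed
qed

lemma LT_zero:
  assumes "\<rho> > 0"
  shows "sojourn_LT \<rho> q n 0 s = 1"
proof -
  interpret I: prob_space "innov_measure \<rho> q" using prob_space_innov[OF assms] .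
  interpret S: prob_space "path_measure \<rho> q"
    unfolding path_measure_def by (rule I.prob_space_stream_space)
  show ?thesis unfolding sojourn_LT_Gf Gf_zero by (simp add: S.prob_space)
qed

lemma LT_rec:
  assumes "\<rho> > 0" "Re s \<ge> 0" "b \<noteq> 0"
  shows "sojourn_LT \<rho> q n b s =
     (\<integral>x. Exf s x * sojourn_LT \<rho> q (fst (ps_step (n, b) x)) (snd (ps_step (n, b) x)) s \<partial>innov_measure \<rho> q)"
proof -
  interpret I: prob_space "innov_measure \<rho> q" using prob_space_innov[OF assms(1)] .
  interpret S: prob_space "stream_space (innov_measure \<rho> q)"
    by (rule I.prob_space_stream_space)
  have int: "integrable (stream_space (innov_measure \<rho> q)) (Gf s n b)"
    by (rule S.integrable_const_bound[where B=1]) (auto simp: norm_Gf assms)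
  show ?thesis
    unfolding sojourn_LT_Gf path_measure_def
    by (subst I.integral_stream_space[OF _ int])
       (auto simp: Gf_Stream assms(3) intro!: Bochner_Integration.integral_cong)
qed

lemma norm_LT:
  assumes "\<rho> > 0" "Re s \<ge> 0"
  shows "norm (sojourn_LT \<rho> q n b s) \<le> 1"
proof -
  interpret I: prob_space "innov_measure \<rho> q" using prob_space_innov[OF assms(1)] .
  interpret S: prob_space "stream_space (innov_measure \<rho> q)"
    by (rule I.prob_space_stream_space)
  have "norm (sojourn_LT \<rho> q n b s) \<le> (\<integral>\<omega>. norm (Gf s n b \<omega>) \<partial>stream_space (innov_measure \<rho> q))"
    unfolding sojourn_LT_Gf path_measure_def by (rule integral_norm_bound)
  also have "\<dots> \<le> (\<integral>\<omega>. 1 \<partial>stream_space (innov_measure \<rho> q))"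
    by (rule integral_mono)
       (auto intro!: S.integrable_const_bound[where B=1] simp: norm_Gf assms)
  also have "\<dots> = 1" by (simp add: S.prob_space)
  finally show ?thesis .
qed

lemma int_prod_bounded:
  fixes f :: "'a \<Rightarrow> complex" and g :: "'b \<Rightarrow> complex"
  assumes "prob_space M1" "prob_space M2"
    and [measurable]: "f \<in> borel_measurable M1" "g \<in> borel_measurable M2"
    and bf: "\<And>x. norm (f x) \<le> Bf" and bg: "\<And>y. norm (g y) \<le> Bg"
  shows "(\<integral>z. f (fst z) * g (snd z) \<partial>(M1 \<Otimes>\<^sub>M M2)) = integral\<^sup>L M1 f * integral\<^sup>L M2 g"
proof -
  interpret P: pair_prob_space M1 M2
    by (simp add: assms(1,2) pair_prob_space.intro pair_sigma_finite_def prob_space_imp_sigma_finite)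
  have int: "integrable (M1 \<Otimes>\<^sub>M M2) (\<lambda>z. f (fst z) * g (snd z))"
    by (rule P.P.integrable_const_bound[where B="Bf * Bg"])
       (auto simp: norm_mult intro!: mult_mono bf bg order_trans[OF norm_ge_zero bf])
  have "(\<integral>z. f (fst z) * g (snd z) \<partial>(M1 \<Otimes>\<^sub>M M2)) = (\<integral>x. \<integral>y. f x * g y \<partial>M2 \<partial>M1)"
    using P.integral_fst'[OF int] by simp
  also have "\<dots> = (\<integral>x. f x * integral\<^sup>L M2 g \<partial>M1)"
    by simp
  also have "\<dots> = integral\<^sup>L M1 f * integral\<^sup>L M2 g"
    by simp
  finally show ?thesis .
qed

lemma int_iter3:
  fixes F :: "'a \<Rightarrow> 'b \<Rightarrow> complex" and g :: "'c \<Rightarrow> complex"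
  assumes "prob_space M1" "prob_space M2" "prob_space M3"
    and [measurable]: "case_prod F \<in> borel_measurable (M1 \<Otimes>\<^sub>M M2)" "g \<in> borel_measurable M3"
    and bF: "\<And>x y. norm (F x y) \<le> B1" and bg: "\<And>y. norm (g y) \<le> B2"
  shows "(\<integral>z. F (fst z) (fst (snd z)) * g (snd (snd z)) \<partial>(M1 \<Otimes>\<^sub>M (M2 \<Otimes>\<^sub>M M3)))
      = (\<integral>x. \<integral>y. F x y \<partial>M2 \<partial>M1) * integral\<^sup>L M3 g"
proof -
  interpret P23: pair_prob_space M2 M3
    by (simp add: assms(2,3) pair_prob_space.intro pair_sigma_finite_def prob_space_imp_sigma_finite)
  have p23: "prob_space (M2 \<Otimes>\<^sub>M M3)" by (rule prob_space_pair) fact+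
  interpret P: pair_prob_space M1 "M2 \<Otimes>\<^sub>M M3"
    by (simp add: assms(1) p23 pair_prob_space.intro pair_sigma_finite_def prob_space_imp_sigma_finite)
  have int: "integrable (M1 \<Otimes>\<^sub>M (M2 \<Otimes>\<^sub>M M3)) (\<lambda>z. F (fst z) (fst (snd z)) * g (snd (snd z)))"
    by (rule P.P.integrable_const_bound[where B="B1 * B2"])
       (auto simp: norm_mult intro!: mult_mono bF bg order_trans[OF norm_ge_zero bF])
  have "(\<integral>z. F (fst z) (fst (snd z)) * g (snd (snd z)) \<partial>(M1 \<Otimes>\<^sub>M (M2 \<Otimes>\<^sub>M M3)))
       = (\<integral>x. \<integral>w. F x (fst w) * g (snd w) \<partial>(M2 \<Otimes>\<^sub>M M3) \<partial>M1)"
    using P.integral_fst'[OF int] by simp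
  also have "\<dots> = (\<integral>x. (\<integral>y. F x y \<partial>M2) * integral\<^sup>L M3 g \<partial>M1)"
  proof (rule Bochner_Integration.integral_cong[OF refl])
    fix x assume "x \<in> space M1"
    then have [measurable]: "F x \<in> borel_measurable M2"
      by measurable
    show "(\<integral>w. F x (fst w) * g (snd w) \<partial>(M2 \<Otimes>\<^sub>M M3)) = (\<integral>y. F x y \<partial>M2) * integral\<^sup>L M3 g"
      by (rule int_prod_bounded[OF assms(2,3)]) (auto intro: bF bg)
  qed
  also have "\<dots> = (\<integral>x. \<integral>y. F x y \<partial>M2 \<partial>M1) * integral\<^sup>L M3 g"
    by simp
  finally show ?thesis .
qed

definition E2 :: "complex \<Rightarrow> real \<Rightarrow> real \<Rightarrow> complex" where
  "E2 s a d = exp (- s * complex_of_real (enn2real (ennreal (min a d))))"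

lemma norm_E2: "Re s \<ge> 0 \<Longrightarrow> norm (E2 s a d) \<le> 1"
  unfolding E2_def by (auto simp: norm_exp_eq_Re mult_nonneg_nonneg)

lemma measurable_E2[measurable]: "(\<lambda>(a, d). E2 s a d) \<in> borel_measurable (M \<Otimes>\<^sub>M N)"
  if "sets M = sets borel" "sets N = sets borel"
  unfolding E2_def using that by measurable

lemma LT_split:
  fixes q :: "nat pmf" and \<rho> :: real and s :: complex and n b :: nat
  assumes rho: "\<rho> > 0" and s: "Re s \<ge> 0" and b: "b \<noteq> 0"
  defines "A \<equiv> density lborel (\<lambda>x. ennreal (exponential_density \<rho> x))"
    and "D \<equiv> density lborel (\<lambda>x. ennreal (exponential_density 1 x))"
    and "Q \<equiv> measure_pmf q"
    and "U \<equiv> uniform_measure lborel {0..(1::real)}"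
    and "c \<equiv> real b / real (n + b)"
  shows "sojourn_LT \<rho> q n b s =
     (\<integral>a. \<integral>d. (if a < d then E2 s a d else 0) \<partial>D \<partial>A) *
        (\<integral>w. sojourn_LT \<rho> q (n + fst w) b s \<partial>(Q \<Otimes>\<^sub>M U))
   + (\<integral>a. \<integral>d. (if \<not> a < d then E2 s a d else 0) \<partial>D \<partial>A) *
        (\<integral>w. (if snd w < c then sojourn_LT \<rho> q n (b - 1) s else 0) \<partial>(Q \<Otimes>\<^sub>M U))
   + (\<integral>a. \<integral>d. (if \<not> a < d then E2 s a d else 0) \<partial>D \<partial>A) *
        (\<integral>w. (if \<not> snd w < c then sojourn_LT \<rho> q (n - 1) b s else 0) \<partial>(Q \<Otimes>\<^sub>M U))"
proof -
  have pA: "prob_space A" unfolding A_def by (rule prob_space_exponential_density[OF rho])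
  have pD: "prob_space D" unfolding D_def by (rule prob_space_exponential_density) simp
  have pQ: "prob_space Q" unfolding Q_def by (rule prob_space_measure_pmf)
  have pU: "prob_space U" unfolding U_def by (rule prob_space_uniform_measure) auto
  have pW: "prob_space (Q \<Otimes>\<^sub>M U)" by (rule prob_space_pair[OF pQ pU])
  have M: "innov_measure \<rho> q = A \<Otimes>\<^sub>M (D \<Otimes>\<^sub>M (Q \<Otimes>\<^sub>M U))"
    unfolding innov_measure_def A_def D_def Q_def U_def ..
  interpret I: prob_space "innov_measure \<rho> q" using prob_space_innov[OF rho] .
  let ?L = "\<lambda>n b. sojourn_LT \<rho> q n b s"
  have nL: "norm (?L n' b') \<le> 1" for n' b' by (rule norm_LT[OF rho s])
  define F1 where "F1 = (\<lambda>a d. if a < d then E2 s a d else 0)"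
  define F2 where "F2 = (\<lambda>a d. if \<not> a < d then E2 s a d else 0)"
  define g1 where "g1 = (\<lambda>w::nat \<times> real. ?L (n + fst w) b)"
  define g2 where "g2 = (\<lambda>w::nat \<times> real. if snd w < c then ?L n (b - 1) else 0)"
  define g3 where "g3 = (\<lambda>w::nat \<times> real. if \<not> snd w < c then ?L (n - 1) b else 0)"
  have sA: "sets A = sets borel" and sD: "sets D = sets borel" unfolding A_def D_def by auto
  have mF1[measurable]: "case_prod F1 \<in> borel_measurable (A \<Otimes>\<^sub>M D)"
    unfolding F1_def A_def D_def E2_def by measurable
  have mF2[measurable]: "case_prod F2 \<in> borel_measurable (A \<Otimes>\<^sub>M D)"
    unfolding F2_def A_def D_def E2_def by measurable
  have mg1[measurable]: "g1 \<in> borel_measurable (Q \<Otimes>\<^sub>M U)"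
    unfolding g1_def Q_def by measurable
  have mg2[measurable]: "g2 \<in> borel_measurable (Q \<Otimes>\<^sub>M U)"
    unfolding g2_def Q_def U_def by measurable
  have mg3[measurable]: "g3 \<in> borel_measurable (Q \<Otimes>\<^sub>M U)"
    unfolding g3_def Q_def U_def by measurable
  have nF1: "norm (F1 a d) \<le> 1" for a d unfolding F1_def using norm_E2[OF s] by auto
  have nF2: "norm (F2 a d) \<le> 1" for a d unfolding F2_def using norm_E2[OF s] by auto
  have ng1: "norm (g1 w) \<le> 1" for w unfolding g1_def using nL by auto
  have ng2: "norm (g2 w) \<le> 1" for w unfolding g2_def using nL by auto
  have ng3: "norm (g3 w) \<le> 1" for w unfolding g3_def using nL by auto
  have pt: "Exf s x * ?L (fst (ps_step (n, b) x)) (snd (ps_step (n, b) x)) =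
      F1 (fst x) (fst (snd x)) * g1 (snd (snd x)) + F2 (fst x) (fst (snd x)) * g2 (snd (snd x))
      + F2 (fst x) (fst (snd x)) * g3 (snd (snd x))" for x
    unfolding F1_def F2_def g1_def g2_def g3_def ps_step_alt Exf_def E2_def c_def
    by (simp split: if_splits)
  have [measurable]: "(\<lambda>x. F1 (fst x) (fst (snd x)) * g1 (snd (snd x))) \<in> borel_measurable (innov_measure \<rho> q)"
     "(\<lambda>x. F2 (fst x) (fst (snd x)) * g2 (snd (snd x))) \<in> borel_measurable (innov_measure \<rho> q)"
     "(\<lambda>x. F2 (fst x) (fst (snd x)) * g3 (snd (snd x))) \<in> borel_measurable (innov_measure \<rho> q)"
    unfolding M by measurable
  have b1: "norm (F x y * g z) \<le> 1" if "norm (F x y) \<le> 1" "norm (g z) \<le> 1" for F :: "real \<Rightarrow> real \<Rightarrow> complex" and g :: "nat \<times> real \<Rightarrow> complex" and x y z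
    using that by (simp add: norm_mult mult_le_one)
  have "?L n b = (\<integral>x. F1 (fst x) (fst (snd x)) * g1 (snd (snd x)) + F2 (fst x) (fst (snd x)) * g2 (snd (snd x))
      + F2 (fst x) (fst (snd x)) * g3 (snd (snd x)) \<partial>innov_measure \<rho> q)"
    unfolding LT_rec[OF rho s b] pt ..
  also have "\<dots> = (\<integral>x. F1 (fst x) (fst (snd x)) * g1 (snd (snd x)) \<partial>innov_measure \<rho> q)
      + (\<integral>x. F2 (fst x) (fst (snd x)) * g2 (snd (snd x)) \<partial>innov_measure \<rho> q)
      + (\<integral>x. F2 (fst x) (fst (snd x)) * g3 (snd (snd x)) \<partial>innov_measure \<rho> q)"
  proof -
    have i1: "integrable (innov_measure \<rho> q) (\<lambda>x. F1 (fst x) (fst (snd x)) * g1 (snd (snd x)))"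
      by (rule I.integrable_const_bound[where B=1]) (auto intro!: b1 nF1 ng1)
    have i2: "integrable (innov_measure \<rho> q) (\<lambda>x. F2 (fst x) (fst (snd x)) * g2 (snd (snd x)))"
      by (rule I.integrable_const_bound[where B=1]) (auto intro!: b1 nF2 ng2)
    have i3: "integrable (innov_measure \<rho> q) (\<lambda>x. F2 (fst x) (fst (snd x)) * g3 (snd (snd x)))"
      by (rule I.integrable_const_bound[where B=1]) (auto intro!: b1 nF2 ng3)
    show ?thesis
      by (simp add: Bochner_Integration.integral_add[OF Bochner_Integration.integrable_add[OF i1 i2] i3]
          Bochner_Integration.integral_add[OF i1 i2])
  qed
  also have "\<dots> = (\<integral>a. \<integral>d. F1 a d \<partial>D \<partial>A) * integral\<^sup>L (Q \<Otimes>\<^sub>M U) g1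
     + (\<integral>a. \<integral>d. F2 a d \<partial>D \<partial>A) * integral\<^sup>L (Q \<Otimes>\<^sub>M U) g2
     + (\<integral>a. \<integral>d. F2 a d \<partial>D \<partial>A) * integral\<^sup>L (Q \<Otimes>\<^sub>M U) g3"
    unfolding M
    using int_iter3[OF pA pD pW mF1 mg1 nF1 ng1] int_iter3[OF pA pD pW mF2 mg2 nF2 ng2]
        int_iter3[OF pA pD pW mF2 mg3 nF2 ng3] by simp
  finally show ?thesis
    unfolding F1_def F2_def g1_def g2_def g3_def .
qed

lemma pmf_integral_infsum:
  fixes f :: "nat \<Rightarrow> complex" and q :: "nat pmf"
  assumes bf: "\<And>m. norm (f m) \<le> B" and q0: "pmf q 0 = 0"
  shows "integral\<^sup>L (measure_pmf q) f = (\<Sum>\<^sub>\<infinity>m\<in>{1..}. of_real (pmf q m) * f m)"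
proof -
  have intQ: "integrable (measure_pmf q) f"
    by (rule measure_pmf.integrable_const_bound[where B=B]) (auto intro: bf)
  have int: "integrable (count_space UNIV) (\<lambda>x. pmf q x *\<^sub>R f x)"
    using intQ unfolding measure_pmf_eq_density
    by (subst (asm) integrable_density) auto
  have "integral\<^sup>L (measure_pmf q) f = (\<integral>x. pmf q x *\<^sub>R f x \<partial>count_space UNIV)"
    unfolding measure_pmf_eq_density by (subst integral_density) auto
  also have "\<dots> = infsetsum (\<lambda>x. pmf q x *\<^sub>R f x) UNIV"
    unfolding infsetsum_def ..
  also have "\<dots> = infsum (\<lambda>x. pmf q x *\<^sub>R f x) UNIV"
    by (rule infsetsum_infsum) (simp add: Infinite_Set_Sum.abs_summable_on_def int)
  also have "\<dots> = (\<Sum>\<^sub>\<infinity>m\<in>{1..}. of_real (pmf q m) * f m)"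
  proof (rule infsum_cong_neutral)
    fix x :: nat assume "x \<in> UNIV - {1..}"
    then have "x = 0" by auto
    then show "pmf q x *\<^sub>R f x = 0" using q0 by simp
  qed (auto simp: scaleR_conv_of_real)
  finally show ?thesis .
qed

lemma QU_int1:
  fixes g :: "nat \<Rightarrow> complex"
  assumes "\<And>m. norm (g m) \<le> B"
  shows "(\<integral>w. g (fst w) \<partial>(measure_pmf q \<Otimes>\<^sub>M uniform_measure lborel {0..(1::real)}))
        = integral\<^sup>L (measure_pmf q) g"
proof -
  have pU: "prob_space (uniform_measure lborel {0..(1::real)})"
    by (rule prob_space_uniform_measure) auto
  interpret U: prob_space "uniform_measure lborel {0..(1::real)}" by (rule pU)
  have "(\<integral>w. g (fst w) * (\<lambda>_. 1) (snd w) \<partial>(measure_pmf q \<Otimes>\<^sub>M uniform_measure lborel {0..(1::real)}))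
      = integral\<^sup>L (measure_pmf q) g * (\<integral>u. 1 \<partial>uniform_measure lborel {0..(1::real)})"
    by (rule int_prod_bounded[OF prob_space_measure_pmf pU, where Bf=B and Bg=1]) (auto intro: assms)
  then show ?thesis by (simp add: U.prob_space)
qed

lemma QU_int2:
  fixes C :: complex and c :: real
  assumes "0 \<le> c" "c \<le> 1"
  shows "(\<integral>w. (if snd w < c then C else 0) \<partial>(measure_pmf q \<Otimes>\<^sub>M uniform_measure lborel {0..(1::real)}))
        = c * C"
    and "(\<integral>w. (if \<not> snd w < c then C else 0) \<partial>(measure_pmf q \<Otimes>\<^sub>M uniform_measure lborel {0..(1::real)}))
        = (1 - c) * C"
proof -
  have pU: "prob_space (uniform_measure lborel {0..(1::real)})"
    by (rule prob_space_uniform_measure) auto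
  interpret U: prob_space "uniform_measure lborel {0..(1::real)}" by (rule pU)
  have mU: "measure (uniform_measure lborel {0..(1::real)}) {..<c} = c"
  proof -
    have e: "{0..1} \<inter> {..<c} = {0..<c}" using assms by auto
    have m1: "measure lborel {0..<c} = c" using assms by (simp add: measure_def)
    have m01: "measure lborel {0..(1::real)} = 1" by (simp add: measure_def)
    show ?thesis
      apply (subst measure_uniform_measure)
         apply (simp_all only: e m1 m01)
        apply auto
      done
  qed
  have mU': "measure (uniform_measure lborel {0..(1::real)}) (UNIV - {..<c}) = 1 - c"
    using U.prob_compl[of "{..<c}"] mU by auto
  have "(\<integral>w. (\<lambda>_. 1) (fst w) * (\<lambda>u. if u < c then C else 0) (snd w)
          \<partial>(measure_pmf q \<Otimes>\<^sub>M uniform_measure lborel {0..(1::real)}))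
      = (\<integral>m. 1 \<partial>measure_pmf q) * (\<integral>u. (if u < c then C else 0) \<partial>uniform_measure lborel {0..(1::real)})"
    by (rule int_prod_bounded[OF prob_space_measure_pmf pU, where Bf=1 and Bg="norm C"]) auto
  also have "(\<integral>u. (if u < c then C else 0) \<partial>uniform_measure lborel {0..(1::real)})
      = (\<integral>u. indicator {..<c} u *\<^sub>R C \<partial>uniform_measure lborel {0..(1::real)})"
    by (rule Bochner_Integration.integral_cong) (auto simp: indicator_def)
  also have "\<dots> = c * C"
    using mU by (simp add: scaleR_conv_of_real)
  finally show "(\<integral>w. (if snd w < c then C else 0) \<partial>(measure_pmf q \<Otimes>\<^sub>M uniform_measure lborel {0..(1::real)}))
        = c * C" by simp
  have "(\<integral>w. (\<lambda>_. 1) (fst w) * (\<lambda>u. if \<not> u < c then C else 0) (snd w)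
          \<partial>(measure_pmf q \<Otimes>\<^sub>M uniform_measure lborel {0..(1::real)}))
      = (\<integral>m. 1 \<partial>measure_pmf q) * (\<integral>u. (if \<not> u < c then C else 0) \<partial>uniform_measure lborel {0..(1::real)})"
    by (rule int_prod_bounded[OF prob_space_measure_pmf pU, where Bf=1 and Bg="norm C"]) auto
  also have "(\<integral>u. (if \<not> u < c then C else 0) \<partial>uniform_measure lborel {0..(1::real)})
      = (\<integral>u. indicator (UNIV - {..<c}) u *\<^sub>R C \<partial>uniform_measure lborel {0..(1::real)})"
    by (rule Bochner_Integration.integral_cong) (auto simp: indicator_def)
  also have "\<dots> = (1 - c) * C"
    using mU' by (simp add: scaleR_conv_of_real)
  finally show "(\<integral>w. (if \<not> snd w < c then C else 0) \<partial>(measure_pmf q \<Otimes>\<^sub>M uniform_measure lborel {0..(1::real)}))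
        = (1 - c) * C" by simp
qed

lemma real_exp_integrable:
  fixes r :: real assumes "r > 0"
  shows "set_integrable lborel (einterval 0 \<infinity>) (\<lambda>x. exp (- x * r))"
proof -
  let ?F = "\<lambda>u. (1 - exp (- u * r)) / r"
  show ?thesis
  proof (rule interval_integral_FTC_nonneg(1)[where F="?F" and A=0 and B="1/r"])
    show "(?F has_real_derivative exp (- t * r)) (at t)" for t
      using assms by (auto intro!: derivative_eq_intros)
    show "((?F \<circ> real_of_ereal) \<longlongrightarrow> 0) (at_right 0)"
      using assms by (auto simp: zero_ereal_def ereal_tendsto_simps intro!: tendsto_eq_intros)
    have *: "((\<lambda>t. exp (- t * r)) \<longlongrightarrow> 0) at_top"
      using assms
      by (auto intro!: exp_at_bot[THEN filterlim_compose] filterlim_tendsto_pos_mult_at_top filterlim_ident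
               simp: filterlim_uminus_at_bot mult.commute[of _ r])
    show "((?F \<circ> real_of_ereal) \<longlongrightarrow> 1 / r) (at_left \<infinity>)"
      using assms unfolding ereal_tendsto_simps
      by (intro filterlim_compose[OF _ *]) (auto intro!: tendsto_eq_intros filterlim_ident)
  qed auto
qed

lemma laplace_complex:
  fixes z :: complex assumes z: "Re z > 0"
  shows "set_integrable lborel (einterval 0 \<infinity>) (\<lambda>x::real. exp (- z * of_real x))"
    and "(LBINT x=0..\<infinity>. exp (- z * of_real x)) = 1 / z"
proof -
  have ri: "set_integrable lborel (einterval 0 \<infinity>) (\<lambda>x. exp (- x * Re z))"
    by (rule real_exp_integrable[OF z])
  show si: "set_integrable lborel (einterval 0 \<infinity>) (\<lambda>x::real. exp (- z * of_real x))"
    using ri unfolding set_integrable_def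
    by (rule Bochner_Integration.integrable_bound) (auto simp: norm_exp_eq_Re indicator_def)
  have zn: "z \<noteq> 0" using z by auto
  let ?F = "\<lambda>x::real. - exp (- z * of_real x) / z"
  have "(LBINT x=0..\<infinity>. exp (- z * of_real x)) = 0 - (- 1 / z)"
  proof (rule interval_integral_FTC_integrable[where F="?F"])
    show "(?F has_vector_derivative exp (- z * of_real x)) (at x)" for x
    proof -
      have "((\<lambda>w. - exp (- z * w) / z) has_field_derivative exp (- z * of_real x)) (at (of_real x))"
        using zn by (auto intro!: derivative_eq_intros simp: field_simps)
      then show ?thesis by (rule has_vector_derivative_real_field)
    qed
    show "isCont (\<lambda>x. exp (- z * of_real x)) x" for x
      by (intro continuous_intros)
    show "set_integrable lborel (einterval 0 \<infinity>) (\<lambda>x. exp (- z * of_real x))" by (rule si)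
    show "((?F \<circ> real_of_ereal) \<longlongrightarrow> - 1 / z) (at_right 0)"
      unfolding zero_ereal_def ereal_tendsto_simps
      using zn by (auto intro!: tendsto_eq_intros)
    have *: "((\<lambda>t::real. exp (- z * of_real t)) \<longlongrightarrow> 0) at_top"
    proof (rule tendsto_norm_zero_cancel)
      have "((\<lambda>t. exp (- t * Re z)) \<longlongrightarrow> 0) at_top"
        using z
        by (auto intro!: exp_at_bot[THEN filterlim_compose] filterlim_tendsto_pos_mult_at_top filterlim_ident
               simp: filterlim_uminus_at_bot mult.commute[of _ "Re z"])
      then show "((\<lambda>t. norm (exp (- z * of_real t))) \<longlongrightarrow> 0) at_top"
        by (simp add: norm_exp_eq_Re mult.commute)
    qed
    show "((?F \<circ> real_of_ereal) \<longlongrightarrow> 0) (at_left \<infinity>)"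
      unfolding ereal_tendsto_simps
      using tendsto_divide[OF tendsto_minus[OF *] tendsto_const[of z]] zn by simp
  qed auto
  then show "(LBINT x=0..\<infinity>. exp (- z * of_real x)) = 1 / z" by simp
qed

lemma exp_dens_laplace:
  fixes w :: complex and l :: real
  assumes l: "l > 0" and w: "Re w \<ge> 0"
  shows "(\<integral>x. exp (- w * of_real x) \<partial>density lborel (\<lambda>x. ennreal (exponential_density l x)))
     = of_real l / (w + of_real l)"
proof -
  have z: "Re (w + of_real l) > 0" using l w by simp
  have eI: "einterval 0 \<infinity> = {0::real<..}"
    by (metis einterval_eq_Ici zero_ereal_def)
  have "(\<integral>x. exp (- w * of_real x) \<partial>density lborel (\<lambda>x. ennreal (exponential_density l x)))
      = (\<integral>x. exponential_density l x *\<^sub>R exp (- w * of_real x) \<partial>lborel)"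
    by (rule integral_density) (auto simp: exponential_density_nonneg[OF l])
  also have "\<dots> = (\<integral>x. of_real l * (indicator (einterval 0 \<infinity>) x *\<^sub>R exp (- (w + of_real l) * of_real x)) \<partial>lborel)"
  proof (rule integral_cong_AE)
    show "AE x in lborel. exponential_density l x *\<^sub>R exp (- w * of_real x)
        = of_real l * (indicator (einterval 0 \<infinity>) x *\<^sub>R exp (- (w + of_real l) * of_real x))"
      using AE_lborel_singleton[of "0::real"]
    proof eventually_elim
      case (elim x)
      show ?case
      proof (cases "x < 0")
        case True then show ?thesis by (simp add: exponential_density_def indicator_def eI)
      next
        case False
        then have "x > 0" using elim by simp
        then show ?thesis
          by (simp add: exponential_density_def indicator_def scaleR_conv_of_real eI
               exp_of_real[symmetric] exp_add[symmetric] algebra_simps)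
      qed
    qed
  qed auto
  also have "\<dots> = of_real l * (\<integral>x. indicator (einterval 0 \<infinity>) x *\<^sub>R exp (- (w + of_real l) * of_real x) \<partial>lborel)"
    by (rule integral_mult_right_zero)
  also have "(\<integral>x. indicator (einterval 0 \<infinity>) x *\<^sub>R exp (- (w + of_real l) * of_real x) \<partial>lborel)
      = (LBINT x=0..\<infinity>. exp (- (w + of_real l) * of_real x))"
    by (simp add: interval_lebesgue_integral_def set_lebesgue_integral_def)
  also have "\<dots> = 1 / (w + of_real l)"
    by (rule laplace_complex(2)[OF z])
  finally show ?thesis by simp
qed

lemma AE_exp_dens:
  assumes "l > 0"
  shows "AE x in density lborel (\<lambda>x. ennreal (exponential_density l x)). 0 \<le> x \<and> x \<noteq> c"
  by (subst AE_density)
     (auto intro!: eventually_mono[OF AE_lborel_singleton[of c]] simp: exponential_density_def)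

lemma meas_exp_gt:
  assumes l: "l > 0" and c: "c \<ge> 0"
  shows "measure (density lborel (\<lambda>x. ennreal (exponential_density l x))) {c<..} = exp (- c * l)"
proof -
  interpret P: prob_space "density lborel (\<lambda>x. ennreal (exponential_density l x))"
    by (rule prob_space_exponential_density[OF l])
  have "emeasure (density lborel (\<lambda>x. ennreal (exponential_density l x))) {..c} = erlang_CDF 0 l c"
    by (rule emeasure_erlang_density[OF l])
  then have m: "measure (density lborel (\<lambda>x. ennreal (exponential_density l x))) {..c} = 1 - exp (- l * c)"
    using c l by (simp add: erlang_CDF_0 P.emeasure_eq_measure)
  have "measure (density lborel (\<lambda>x. ennreal (exponential_density l x))) (UNIV - {..c})
      = 1 - measure (density lborel (\<lambda>x. ennreal (exponential_density l x))) {..c}"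
    using P.prob_compl[of "{..c}"] by simp
  moreover have "UNIV - {..c} = {c<..}" by auto
  ultimately show ?thesis using m by (simp add: mult.commute)
qed

lemma int_ind_const:
  fixes C :: complex
  assumes "prob_space M" "A \<in> sets M"
  shows "(\<integral>x. indicator A x *\<^sub>R C \<partial>M) = of_real (measure M A) * C"
proof -
  interpret prob_space M by fact
  have "integrable M (indicator A :: _ \<Rightarrow> real)"
    using assms(2) emeasure_finite[of A] by (intro integrable_real_indicator) (auto simp: less_top[symmetric])
  then have "(\<integral>x. indicator A x *\<^sub>R C \<partial>M) = (\<integral>x. indicator A x \<partial>M) *\<^sub>R C"
    by (rule integral_scaleR_left)
  also have "\<dots> = measure M A *\<^sub>R C"
    using assms(2) sets.Int_space_eq2 by simp
  finally show ?thesis by (simp add: scaleR_conv_of_real)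
qed

lemma K1:
  assumes rho: "\<rho> > 0" and s: "Re s \<ge> 0"
  shows "(\<integral>a. \<integral>d. (if a < d then E2 s a d else 0)
            \<partial>density lborel (\<lambda>x. ennreal (exponential_density 1 x))
            \<partial>density lborel (\<lambda>x. ennreal (exponential_density \<rho> x)))
       = of_real \<rho> / (s + 1 + of_real \<rho>)"
proof -
  let ?A = "density lborel (\<lambda>x. ennreal (exponential_density \<rho> x))"
  let ?D = "density lborel (\<lambda>x. ennreal (exponential_density (1::real) x))"
  have pD: "prob_space ?D" by (rule prob_space_exponential_density) simp
  have inner: "(\<integral>d. (if a < d then E2 s a d else 0) \<partial>?D) = exp (- (s + 1) * of_real a)"
    if a: "a \<ge> 0" for a
  proof -
    have "(\<integral>d. (if a < d then E2 s a d else 0) \<partial>?D) = (\<integral>d. indicator {a<..} d *\<^sub>R exp (- s * of_real a) \<partial>?D)"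
      by (rule Bochner_Integration.integral_cong) (auto simp: E2_def indicator_def a)
    also have "\<dots> = of_real (measure ?D {a<..}) * exp (- s * of_real a)"
      by (rule int_ind_const[OF pD]) simp
    also have "\<dots> = exp (- (s + 1) * of_real a)"
      using a by (simp add: meas_exp_gt exp_of_real[symmetric] exp_add[symmetric] algebra_simps)
    finally show ?thesis .
  qed
  have [measurable]: "(\<lambda>a. \<integral>d. (if a < d then E2 s a d else 0) \<partial>?D) \<in> borel_measurable ?A"
  proof -
    interpret D: prob_space ?D by (rule pD)
    show ?thesis
      by (rule D.borel_measurable_lebesgue_integral) (unfold E2_def, measurable)
  qed
  have "(\<integral>a. \<integral>d. (if a < d then E2 s a d else 0) \<partial>?D \<partial>?A) = (\<integral>a. exp (- (s + 1) * of_real a) \<partial>?A)"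
    by (rule integral_cong_AE)
       (auto intro!: eventually_mono[OF AE_exp_dens[OF rho, of 0]] simp: inner)
  also have "\<dots> = of_real \<rho> / (s + 1 + of_real \<rho>)"
    by (rule exp_dens_laplace[OF rho]) (use s in simp)
  finally show ?thesis .
qed

lemma K2:
  assumes rho: "\<rho> > 0" and s: "Re s \<ge> 0"
  shows "(\<integral>a. \<integral>d. (if \<not> a < d then E2 s a d else 0)
            \<partial>density lborel (\<lambda>x. ennreal (exponential_density 1 x))
            \<partial>density lborel (\<lambda>x. ennreal (exponential_density \<rho> x)))
       = 1 / (s + of_real \<rho> + 1)"
proof -
  let ?A = "density lborel (\<lambda>x. ennreal (exponential_density \<rho> x))"
  let ?D = "density lborel (\<lambda>x. ennreal (exponential_density (1::real) x))"
  have pD: "prob_space ?D" by (rule prob_space_exponential_density) simp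
  have pA: "prob_space ?A" by (rule prob_space_exponential_density[OF rho])
  interpret P: pair_prob_space ?A ?D
    by (simp add: pA pD pair_prob_space.intro pair_sigma_finite_def prob_space_imp_sigma_finite)
  define F2 where "F2 = (\<lambda>a d. if \<not> a < d then E2 s a d else 0)"
  have mF2[measurable]: "case_prod F2 \<in> borel_measurable (?A \<Otimes>\<^sub>M ?D)"
    unfolding F2_def E2_def by measurable
  have intF2: "integrable (?A \<Otimes>\<^sub>M ?D) (case_prod F2)"
    by (rule P.P.integrable_const_bound[where B=1])
       (auto simp: F2_def norm_E2[OF s])
  have inner: "(\<integral>a. F2 a d \<partial>?A) = exp (- (s + of_real \<rho>) * of_real d)"
    if d: "d \<ge> 0" for d
  proof -
    have [measurable]: "(\<lambda>a. F2 a d) \<in> borel_measurable ?A"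
      unfolding F2_def E2_def by measurable
    have "(\<integral>a. F2 a d \<partial>?A) = (\<integral>a. indicator {d<..} a *\<^sub>R exp (- s * of_real d) \<partial>?A)"
      by (rule integral_cong_AE)
         (auto intro!: eventually_mono[OF AE_exp_dens[OF rho, of d]]
               simp: F2_def E2_def indicator_def d)
    also have "\<dots> = of_real (measure ?A {d<..}) * exp (- s * of_real d)"
      by (rule int_ind_const[OF pA]) simp
    also have "\<dots> = exp (- (s + of_real \<rho>) * of_real d)"
      using d rho by (simp add: meas_exp_gt exp_of_real[symmetric] exp_add[symmetric] algebra_simps)
    finally show ?thesis .
  qed
  have [measurable]: "(\<lambda>d. \<integral>a. F2 a d \<partial>?A) \<in> borel_measurable ?D"
  proof -
    have m: "(\<lambda>(d, a). F2 a d) \<in> borel_measurable (?D \<Otimes>\<^sub>M ?A)"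
      unfolding F2_def E2_def by measurable
    show ?thesis
      by (rule P.M1.borel_measurable_lebesgue_integral[OF m])
  qed
  have "(\<integral>a. \<integral>d. F2 a d \<partial>?D \<partial>?A) = integral\<^sup>L (?A \<Otimes>\<^sub>M ?D) (\<lambda>(a, d). F2 a d)"
    by (rule P.integral_fst[OF intF2])
  also have "\<dots> = (\<integral>d. \<integral>a. F2 a d \<partial>?A \<partial>?D)"
    by (rule P.integral_snd[OF intF2, symmetric])
  also have "\<dots> = (\<integral>d. exp (- (s + of_real \<rho>) * of_real d) \<partial>?D)"
    by (rule integral_cong_AE)
       (auto intro!: eventually_mono[OF AE_exp_dens[of 1 0]] simp: inner)
  also have "\<dots> = of_real 1 / (s + of_real \<rho> + of_real 1)"
    by (rule exp_dens_laplace) (use s rho in simp_all)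
  finally show ?thesis unfolding F2_def by simp
qed

theorem mainTheorem3:
  fixes \<rho> :: real and q :: "nat pmf" and n b :: nat and s :: complex
  assumes "\<rho> > 0"
    and "pmf q 0 = 0"
    and "\<forall>m\<ge>1. pmf q m > 0"
    and "b \<ge> 1"
    and "Re s \<ge> 0"
  shows "sojourn_LT \<rho> q n b s =
      ((if b \<ge> 2 then of_nat b * sojourn_LT \<rho> q n (b - 1) s else 0) + (if b = 1 then 1 else 0))
        / (of_nat (n + b) * (s + of_real \<rho> + 1))
    + 1 / (s + of_real \<rho> + 1) * (of_nat n / of_nat (n + b)) * sojourn_LT \<rho> q (n - 1) b s
    + of_real \<rho> / (s + of_real \<rho> + 1) *
        (\<Sum>\<^sub>\<infinity>m\<in>{1..}. of_real (pmf q m) * sojourn_LT \<rho> q (n + m) b s)"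
proof -
  have rho: "\<rho> > 0" and q0: "pmf q 0 = 0" and b: "b \<noteq> 0" and s: "Re s \<ge> 0"
    using assms by auto
  let ?L = "\<lambda>n b. sojourn_LT \<rho> q n b s"
  define c where "c = real b / real (n + b)"
  have c01: "0 \<le> c" "c \<le> 1" using b unfolding c_def by auto
  have nL: "norm (?L n' b') \<le> 1" for n' b' by (rule norm_LT[OF rho s])
  have I1: "(\<integral>w. ?L (n + fst w) b \<partial>(measure_pmf q \<Otimes>\<^sub>M uniform_measure lborel {0..(1::real)}))
      = (\<Sum>\<^sub>\<infinity>m\<in>{1..}. of_real (pmf q m) * ?L (n + m) b)"
  proof -
    have "(\<integral>w. ?L (n + fst w) b \<partial>(measure_pmf q \<Otimes>\<^sub>M uniform_measure lborel {0..(1::real)}))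
        = integral\<^sup>L (measure_pmf q) (\<lambda>m. ?L (n + m) b)"
      by (rule QU_int1[where B=1]) (rule nL)
    also have "\<dots> = (\<Sum>\<^sub>\<infinity>m\<in>{1..}. of_real (pmf q m) * ?L (n + m) b)"
      by (rule pmf_integral_infsum[where B=1, OF _ q0]) (rule nL)
    finally show ?thesis .
  qed
  have spos: "s + of_real \<rho> + 1 \<noteq> 0"
  proof
    assume "s + of_real \<rho> + 1 = 0"
    then have "Re (s + of_real \<rho> + 1) = 0" by simp
    then show False using s rho by simp
  qed
  have nb: "of_nat (n + b) \<noteq> (0::complex)" using b by (metis add_is_0 of_nat_eq_0_iff)
  have nb': "(of_nat n + of_nat b :: complex) \<noteq> 0" using nb by simp
  have eq: "?L n b = of_real \<rho> / (s + 1 + of_real \<rho>) * (\<Sum>\<^sub>\<infinity>m\<in>{1..}. of_real (pmf q m) * ?L (n + m) b)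
     + 1 / (s + of_real \<rho> + 1) * (of_real c * ?L n (b - 1))
     + 1 / (s + of_real \<rho> + 1) * (of_real (1 - c) * ?L (n - 1) b)"
    using LT_split[OF rho s b, of q n] unfolding K1[OF rho s] K2[OF rho s] I1
      QU_int2[OF c01, unfolded c_def] by (simp add: c_def)
  have c1: "(of_real c :: complex) = of_nat b / of_nat (n + b)"
    unfolding c_def by simp
  have c2: "(of_real (1 - c) :: complex) = of_nat n / of_nat (n + b)"
    using b nb' unfolding c_def by (simp add: field_simps)
  have first: "1 / (s + of_real \<rho> + 1) * (of_real c * ?L n (b - 1)) =
      ((if b \<ge> 2 then of_nat b * ?L n (b - 1) else 0) + (if b = 1 then 1 else 0))
        / (of_nat (n + b) * (s + of_real \<rho> + 1))"
  proof (cases "b = 1")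
    case True
    then show ?thesis unfolding c1 using LT_zero[OF rho] by simp
  next
    case False
    then have "b \<ge> 2" using b by simp
    then show ?thesis unfolding c1 using False by simp
  qed
  show ?thesis
    unfolding eq first c2 by (simp add: add.commute add.left_commute)
qed

end
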